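(* Let $G$ be a connected graph with $n$ vertices. (a) If $n=12$, then $\frac{q(G)}{R(G)}\le \frac{11}{3}$, with equality if and only if $G=K_{12}$. (b) If $n\ge 13$, then $\frac{q(G)}{R(G)}\le \frac{n}{\sqrt{n-1}}$, with equality if and only if $G=S_n$.
   Context: All graphs are finite and simple. For a graph $G$ and a vertex $u$, $d(u)$ denotes the degree of $u$. The Randić index is $R(G)=\sum_{\{u,v\}\in E(G)} \frac{1}{\sqrt{d(u)d(v)}}$. The signless Laplacian matrix of $G$ is $Q=D+A$, where $D$ is the diagonal matrix of vertex degrees and $A$ is the adjacency matrix; $q(G)$ denotes the largest eigenvalue of $Q$. $K_n$ is the complete graph and $S_n$ the star on $n$ vertices. *)

theory Defs
  imports "HOL-Analysis.Analysis"
begin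

text \<open>A finite simple graph on the vertex set UNIV of a finite type 'a,
  given by its edge set: a set of 2-element subsets of the vertices.\<close>

definition simple_graph :: "'a set set \<Rightarrow> bool" where
  "simple_graph E \<longleftrightarrow> (\<forall>e\<in>E. card e = 2)"

definition adj :: "'a set set \<Rightarrow> 'a \<Rightarrow> 'a \<Rightarrow> bool" where
  "adj E u v \<longleftrightarrow> {u, v} \<in> E"

definition connected_graph :: "'a set set \<Rightarrow> bool" where
  "connected_graph E \<longleftrightarrow> (\<forall>u v. (adj E)\<^sup>*\<^sup>* u v)"

definition degree :: "'a set set \<Rightarrow> 'a \<Rightarrow> nat" where
  "degree E u = card {e \<in> E. u \<in> e}"

definition randic :: "'a set set \<Rightarrow> real" where
  "randic E = (\<Sum>e\<in>E. 1 / sqrt (\<Prod>u\<in>e. real (degree E u)))"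

definition signless_laplacian :: "('a::finite) set set \<Rightarrow> real^'a^'a" where
  "signless_laplacian E = (\<chi> i j. (if i = j then real (degree E i) else 0)
                                  + (if adj E i j then 1 else 0))"

definition is_eigenvalue :: "real^'n^'n \<Rightarrow> real \<Rightarrow> bool" where
  "is_eigenvalue M \<mu> \<longleftrightarrow> (\<exists>x. x \<noteq> 0 \<and> M *v x = \<mu> *\<^sub>R x)"

definition q_index :: "('a::finite) set set \<Rightarrow> real" where
  "q_index E = Max {\<mu>. is_eigenvalue (signless_laplacian E) \<mu>}"

definition is_complete_graph :: "'a set set \<Rightarrow> bool" where
  "is_complete_graph E \<longleftrightarrow> (\<forall>u v. u \<noteq> v \<longrightarrow> adj E u v)"

definition is_star_graph :: "'a set set \<Rightarrow> bool" where
  "is_star_graph E \<longleftrightarrow> (\<exists>c. E = {{c, v} | v. v \<noteq> c})"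

end

theory Submission
  imports Defs
begin


definition nbr :: "'a set set \<Rightarrow> 'a \<Rightarrow> 'a set" where
  "nbr E u = {v. adj E u v}"

lemma adj_sym: "adj E u v = adj E v u"
  unfolding adj_def by (simp add: insert_commute)

lemma adj_neq: "simple_graph E \<Longrightarrow> adj E u v \<Longrightarrow> u \<noteq> v"
  unfolding adj_def simple_graph_def by fastforce

lemma edge_form: "simple_graph E \<Longrightarrow> e \<in> E \<Longrightarrow> \<exists>a b. a \<noteq> b \<and> e = {a, b}"
  unfolding simple_graph_def by (metis card_2_iff)

lemma finite_E: "finite (E :: ('a::finite) set set)"
  by simp

lemma degree_card_nbr:
  assumes "simple_graph E"
  shows "degree E u = card (nbr E u)"
proof -
  have "bij_betw (\<lambda>v. {u, v}) (nbr E u) {e\<in>E. u \<in> e}"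
  proof (rule bij_betw_imageI)
    show "inj_on (\<lambda>v. {u, v}) (nbr E u)"
      by (auto simp: inj_on_def doubleton_eq_iff)
    show "(\<lambda>v. {u, v}) ` nbr E u = {e \<in> E. u \<in> e}"
    proof
      show "(\<lambda>v. {u, v}) ` nbr E u \<subseteq> {e \<in> E. u \<in> e}"
        by (auto simp: nbr_def adj_def)
      show "{e \<in> E. u \<in> e} \<subseteq> (\<lambda>v. {u, v}) ` nbr E u"
      proof
        fix e assume "e \<in> {e \<in> E. u \<in> e}"
        then have e: "e \<in> E" "u \<in> e" by auto
        then obtain a b where ab: "a \<noteq> b" "e = {a,b}" using edge_form[OF assms] by blast
        show "e \<in> (\<lambda>v. {u, v}) ` nbr E u"
        proof (cases "u = a")
          case True then show ?thesis using e ab by (auto simp: nbr_def adj_def image_iff)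
        next
          case False then have "u = b" using e ab by auto
          then show ?thesis using e ab by (auto simp: nbr_def adj_def image_iff insert_commute)
        qed
      qed
    qed
  qed
  then show ?thesis unfolding degree_def by (simp add: bij_betw_same_card)
qed

lemma nbr_sub: "simple_graph E \<Longrightarrow> nbr E u \<subseteq> UNIV - {u}"
  using adj_neq[of E] by (auto simp: nbr_def)

lemma degree_le:
  assumes "simple_graph E"
  shows "degree E (u::'a::finite) \<le> CARD('a) - 1"
proof -
  have "card (nbr E u) \<le> card (UNIV - {u} :: 'a set)"
    using nbr_sub[OF assms] by (intro card_mono) auto
  then show ?thesis by (simp add: degree_card_nbr[OF assms] card_Diff_singleton)
qed

lemma degree_ge1:
  assumes "simple_graph E" "connected_graph E" "CARD('a) \<ge> 2"
  shows "degree E (u::'a::finite) \<ge> 1"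
proof -
  obtain v :: 'a where "v \<noteq> u"
  proof -
    have "card (UNIV - {u} :: 'a set) \<ge> 1" using assms(3) by (simp add: card_Diff_singleton)
    then have "UNIV - {u} \<noteq> ({} :: 'a set)" by (metis card.empty not_one_le_zero)
    then show ?thesis using that by blast
  qed
  have "(adj E)\<^sup>*\<^sup>* u v" using assms(2) unfolding connected_graph_def by blast
  then obtain w where "adj E u w" using \<open>v \<noteq> u\<close>
    by (metis converse_rtranclpE)
  then have "w \<in> nbr E u" by (simp add: nbr_def)
  then have "nbr E u \<noteq> {}" by auto
  then show ?thesis by (simp add: degree_card_nbr[OF assms(1)] Suc_le_eq card_gt_0_iff)
qed

lemma sum_edges_vertices:
  fixes E :: "('a::finite) set set" and f :: "'a \<Rightarrow> real"
  shows "(\<Sum>e\<in>E. \<Sum>v\<in>e. f v) = (\<Sum>v\<in>UNIV. real (degree E v) * f v)"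
proof -
  have "(\<Sum>e\<in>E. \<Sum>v\<in>e. f v) = (\<Sum>e\<in>E. \<Sum>v\<in>UNIV. if v \<in> e then f v else 0)"
  proof (rule sum.cong[OF refl])
    fix e show "(\<Sum>v\<in>e. f v) = (\<Sum>v\<in>UNIV. if v \<in> e then f v else 0)"
      using sum.inter_restrict[where A=UNIV and B=e and g=f] by simp
  qed
  also have "\<dots> = (\<Sum>v\<in>UNIV. \<Sum>e\<in>E. if v \<in> e then f v else 0)"
    by (rule sum.swap)
  also have "\<dots> = (\<Sum>v\<in>UNIV. real (degree E v) * f v)"
    by (intro sum.cong refl) (simp add: sum.If_cases degree_def Int_def conj_commute)
  finally show ?thesis .
qed



lemma poly_core:
  fixes a c k x y :: real
  assumes "0 < a" "a < 1" "a \<le> x" "x \<le> 1" "a \<le> y" "y \<le> 1" "k > 0"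
    and G11: "c - 2*a^2 - 2*k \<ge> 0" and G1a: "c*a - 2*a^2 - k - k*a^2 \<ge> 0"
    and Gaa: "c*a^2 - 2*a^2 - 2*k*a^2 \<ge> 0"
  shows "c*x*y - 2*a^2 - k*(x^2+y^2) \<ge> 0"
    and "c*x*y - 2*a^2 - k*(x^2+y^2) = 0 \<Longrightarrow> (x = a \<or> x = 1) \<and> (y = a \<or> y = 1)"
proof -
  define G where "G = c*x*y - 2*a^2 - k*((1+a)*x - a) - k*((1+a)*y - a)"
  have F: "c*x*y - 2*a^2 - k*(x^2+y^2) = G + k*((x-a)*(1-x)) + k*((y-a)*(1-y))"
    unfolding G_def by (simp add: algebra_simps power2_eq_square)
  have id: "G*(1-a)^2 = (1-x)*(1-y)*(c*a^2 - 2*a^2 - 2*k*a^2) + (x-a)*(1-y)*(c*a - 2*a^2 - k - k*a^2)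
     + (1-x)*(y-a)*(c*a - 2*a^2 - k - k*a^2) + (x-a)*(y-a)*(c - 2*a^2 - 2*k)"
    unfolding G_def by (simp add: algebra_simps power2_eq_square)
  have "G*(1-a)^2 \<ge> 0" unfolding id
    using assms by (intro add_nonneg_nonneg mult_nonneg_nonneg) auto
  moreover have "(1-a)^2 > 0" using assms by simp
  ultimately have G0: "G \<ge> 0" by (simp add: zero_le_mult_iff)
  have X: "k*((x-a)*(1-x)) \<ge> 0" "k*((y-a)*(1-y)) \<ge> 0" using assms by auto
  show "c*x*y - 2*a^2 - k*(x^2+y^2) \<ge> 0" unfolding F using G0 X by linarith
  assume "c*x*y - 2*a^2 - k*(x^2+y^2) = 0"
  then have "k*((x-a)*(1-x)) = 0" "k*((y-a)*(1-y)) = 0" unfolding F using G0 X by linarith+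
  then show "(x = a \<or> x = 1) \<and> (y = a \<or> y = 1)" using assms by auto
qed



definition cst :: "nat \<Rightarrow> real" where
  "cst n = (if n = 12 then 11/3 else real n / sqrt (real n - 1))"

definition extremal :: "nat \<Rightarrow> nat \<Rightarrow> nat \<Rightarrow> bool" where
  "extremal n p q = (if n = 12 then p = 11 \<and> q = 11 else (p = 1 \<and> q = n-1) \<or> (p = n-1 \<and> q = 1))"

definition Fe :: "nat \<Rightarrow> nat \<Rightarrow> nat \<Rightarrow> real" where
  "Fe n p q = cst n / sqrt (real p * real q) - 2/(real n - 1) - (real n - 2)/real n * (1/real p + 1/real q)"

lemma G1a_zero: "N > (2::real) \<Longrightarrow> N/(N-1) - 2*(1/(N-1)) - (N-2)/N - (N-2)/N*(1/(N-1)) = 0"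
proof -
  assume "N > 2"
  define d where "d = N - 1"
  have N: "N = d + 1" unfolding d_def by simp
  have "d > 1" using \<open>N > 2\<close> unfolding N by simp
  then have p: "d > 0" "d + 1 > 0" "d*d + d*(d*d) > 0" "d + d*d > 0" "d*(d+1) > 0" by (auto simp: add_pos_pos)
  have e: "(d+1)/d - 2*(1/d) - (d-1)/(d+1) - (d-1)/(d+1)*(1/d) = ((d+1)*(d+1) - 2*(d+1) - (d-1)*d - (d-1)) / (d*(d+1))"
    using p by (simp add: field_simps)
  have "(d+1)*(d+1) - 2*(d+1) - (d-1)*d - (d-1) = 0" by (simp add: algebra_simps)
  then show ?thesis unfolding N using e by (simp add: algebra_simps)
qed

lemma s11: "sqrt 11 < (121/36::real)"
proof -
  have "sqrt 11 < sqrt ((121/36::real)^2)" by (subst real_sqrt_less_iff) (simp add: power2_eq_square)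
  then show ?thesis by simp
qed

lemma big13:
  fixes n :: nat assumes "n \<ge> 13"
  shows "real n ^ 4 > 16 * (real n - 1)^3"
proof -
  obtain t where t: "n = t + 13" using assms by (metis add.commute le_iff_add)
  have "real n ^ 4 - 16 * (real n - 1)^3 = real t^4 + 36*real t^3 + 438*real t^2 + 1876*real t + 913"
    unfolding t by (simp add: algebra_simps power2_eq_square power3_eq_cube power4_eq_xxxx)
  moreover have "real t^4 + 36*real t^3 + 438*real t^2 + 1876*real t + 913 > 0"
    by (intro add_nonneg_pos add_nonneg_nonneg) auto
  ultimately show ?thesis by linarith
qed

lemma edge_ineq:
  fixes n p q :: nat
  assumes n: "n \<ge> 12" and p: "1 \<le> p" "p \<le> n - 1" and q: "1 \<le> q" "q \<le> n - 1"
  shows "Fe n p q \<ge> 0" and "Fe n p q = 0 \<longleftrightarrow> extremal n p q"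
proof -
  define a where "a = 1 / sqrt (real n - 1)"
  define x where "x = 1 / sqrt (real p)"
  define y where "y = 1 / sqrt (real q)"
  define k where "k = (real n - 2) / real n"
  define c where "c = cst n"
  have n1: "real n - 1 > 1" using n by simp
  have a2: "a^2 = 1/(real n - 1)" unfolding a_def using n1 by (simp add: power_divide)
  have x2: "x^2 = 1/real p" unfolding x_def using p by (simp add: power_divide)
  have y2: "y^2 = 1/real q" unfolding y_def using q by (simp add: power_divide)
  have xy: "x*y = 1 / sqrt (real p * real q)" unfolding x_def y_def by (simp add: real_sqrt_mult)
  have FF: "Fe n p q = c*x*y - 2*a^2 - k*(x^2+y^2)"
    unfolding Fe_def c_def k_def using xy x2 y2 a2 by (simp add: mult.assoc)
  have a0: "0 < a" unfolding a_def using n1 by simp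
  have a1: "a < 1" unfolding a_def using n1 by simp
  have pn: "real p \<le> real n - 1" using p n by linarith
  have qn: "real q \<le> real n - 1" using q n by linarith
  have ax: "a \<le> x" unfolding a_def x_def using p pn
    by (intro divide_left_mono) (auto intro: real_sqrt_le_mono)
  have x1: "x \<le> 1" unfolding x_def using p by simp
  have ay: "a \<le> y" unfolding a_def y_def using q qn
    by (intro divide_left_mono) (auto intro: real_sqrt_le_mono)
  have y1: "y \<le> 1" unfolding y_def using q by simp
  have k0: "k > 0" unfolding k_def using n by simp
  have xa_iff: "x = a \<longleftrightarrow> p = n - 1" unfolding x_def a_def using p n by (auto simp: of_nat_diff)
  have x1_iff: "x = 1 \<longleftrightarrow> p = 1" unfolding x_def using p by auto
  have ya_iff: "y = a \<longleftrightarrow> q = n - 1" unfolding y_def a_def using q n by (auto simp: of_nat_diff)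
  have y1_iff: "y = 1 \<longleftrightarrow> q = 1" unfolding y_def using q by auto
  define D where "D = c - 2 - 2*k"
  have G11: "c - 2*a^2 - 2*k = D + 2*(1 - a^2)" unfolding D_def by simp
  have Gaa: "c*a^2 - 2*a^2 - 2*k*a^2 = a^2 * D" unfolding D_def by (simp add: algebra_simps)
  have a21: "a^2 < 1" using a0 a1 by (simp add: power_less_one_iff)
  show "Fe n p q \<ge> 0" and "Fe n p q = 0 \<longleftrightarrow> extremal n p q"
  proof -
    consider (A) "n = 12" | (B) "n \<ge> 13" using n by linarith
    then have "Fe n p q \<ge> 0 \<and> (Fe n p q = 0 \<longleftrightarrow> extremal n p q)"
    proof cases
      case A
      have D0: "D = 0" unfolding D_def c_def k_def cst_def using A by simp
      have aval: "a = 1/sqrt 11" unfolding a_def using A by simp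
      have "a > 36/121" unfolding aval using s11 by (simp add: field_simps)
      then have G1a: "c*a - 2*a^2 - k - k*a^2 > 0"
        unfolding c_def k_def cst_def a2 using A by simp
      have G11p: "c - 2*a^2 - 2*k > 0" using G11 D0 a21 by simp
      have G1: "c*x*y - 2*a^2 - k*(x^2+y^2) \<ge> 0"
        using poly_core(1)[where c=c, OF a0 a1 ax x1 ay y1 k0] G11p G1a Gaa D0 by simp
      have G2: "c*x*y - 2*a^2 - k*(x^2+y^2) = 0 \<longleftrightarrow> x = a \<and> y = a"
      proof
        assume h: "c*x*y - 2*a^2 - k*(x^2+y^2) = 0"
        then have "(x = a \<or> x = 1) \<and> (y = a \<or> y = 1)"
          using poly_core(2)[where c=c, OF a0 a1 ax x1 ay y1 k0] G11p G1a Gaa D0 by simp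
        then show "x = a \<and> y = a" using h G11p G1a
          by (auto simp: algebra_simps power2_eq_square)
      next
        assume "x = a \<and> y = a"
        then show "c*x*y - 2*a^2 - k*(x^2+y^2) = 0" using Gaa D0
          by (simp add: algebra_simps power2_eq_square)
      qed
      show ?thesis unfolding FF extremal_def using G1 G2 xa_iff ya_iff A by simp
    next
      case B
      have s0: "sqrt (real n - 1) > 0" using n1 by simp
      have ss: "sqrt (real n - 1)^2 = real n - 1" using n1 by simp
      have cB: "c = real n / sqrt (real n - 1)" unfolding c_def cst_def using B by simp
      have ca: "c*a = real n / (real n - 1)" unfolding cB a_def using n1
        by (simp add: field_simps ss[unfolded power2_eq_square])
      have G1a: "c*a - 2*a^2 - k - k*a^2 = 0"
        unfolding ca a2 k_def using G1a_zero[of "real n"] n by simp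
      have "(4*real n - 4) * sqrt (real n - 1) < real n ^ 2"
      proof -
        have "((4*real n - 4) * sqrt (real n - 1))^2 = 16 * (real n - 1)^3"
          by (simp add: power_mult_distrib ss) (simp add: algebra_simps power2_eq_square power3_eq_cube)
        also have "\<dots> < (real n ^ 2)^2" using big13[OF B] by simp
        finally show ?thesis
          by (rule power_less_imp_less_base) simp
      qed
      then have D0: "D > 0" unfolding D_def cB k_def using s0 n
        by (simp add: field_simps power2_eq_square)
      have G11p: "c - 2*a^2 - 2*k > 0" using G11 D0 a21 by simp
      have Gaap: "c*a^2 - 2*a^2 - 2*k*a^2 > 0" using Gaa D0 a0 by simp
      have G1: "c*x*y - 2*a^2 - k*(x^2+y^2) \<ge> 0"
        using poly_core(1)[where c=c, OF a0 a1 ax x1 ay y1 k0] G11p G1a Gaap by simp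
      have G2: "c*x*y - 2*a^2 - k*(x^2+y^2) = 0 \<longleftrightarrow> (x = 1 \<and> y = a) \<or> (x = a \<and> y = 1)"
      proof
        assume h: "c*x*y - 2*a^2 - k*(x^2+y^2) = 0"
        then have "(x = a \<or> x = 1) \<and> (y = a \<or> y = 1)"
          using poly_core(2)[where c=c, OF a0 a1 ax x1 ay y1 k0] G11p G1a Gaap by simp
        then show "(x = 1 \<and> y = a) \<or> (x = a \<and> y = 1)" using h G11p Gaap
          by (auto simp: algebra_simps power2_eq_square)
      next
        assume "(x = 1 \<and> y = a) \<or> (x = a \<and> y = 1)"
        then show "c*x*y - 2*a^2 - k*(x^2+y^2) = 0" using G1a
          by (auto simp: algebra_simps power2_eq_square)
      qed
      show ?thesis unfolding FF extremal_def using G1 G2 xa_iff ya_iff x1_iff y1_iff B by auto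
    qed
    then show "Fe n p q \<ge> 0" and "Fe n p q = 0 \<longleftrightarrow> extremal n p q" by auto
  qed
qed



lemma eig_indep_core:
  fixes A :: "real^'n^'n" and v :: "real \<Rightarrow> real^'n"
  assumes ev: "\<And>\<mu>. \<mu> \<in> L \<Longrightarrow> A *v v \<mu> = \<mu> *\<^sub>R v \<mu> \<and> v \<mu> \<noteq> 0"
    and fin: "finite L"
  shows "\<forall>c. (\<Sum>\<mu>\<in>L. c \<mu> *\<^sub>R v \<mu>) = 0 \<longrightarrow> (\<forall>\<mu>\<in>L. c \<mu> = 0)"
  using fin ev
proof (induction L rule: finite_induct)
  case empty then show ?case by simp
next
  case (insert \<mu>0 L)
  show ?case
  proof (intro allI impI)
    fix c assume S: "(\<Sum>\<mu>\<in>insert \<mu>0 L. c \<mu> *\<^sub>R v \<mu>) = 0"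
    have S': "c \<mu>0 *\<^sub>R v \<mu>0 + (\<Sum>\<mu>\<in>L. c \<mu> *\<^sub>R v \<mu>) = 0"
      using S insert.hyps by simp
    have "A *v (c \<mu>0 *\<^sub>R v \<mu>0 + (\<Sum>\<mu>\<in>L. c \<mu> *\<^sub>R v \<mu>)) = 0" using S' by simp
    then have "c \<mu>0 *\<^sub>R (A *v v \<mu>0) + (\<Sum>\<mu>\<in>L. c \<mu> *\<^sub>R (A *v v \<mu>)) = 0"
      by (simp add: matrix_vector_right_distrib matrix_vector_mult_scaleR
            linear_sum[OF matrix_vector_mul_linear] o_def)
    then have T: "c \<mu>0 *\<^sub>R (\<mu>0 *\<^sub>R v \<mu>0) + (\<Sum>\<mu>\<in>L. c \<mu> *\<^sub>R (\<mu> *\<^sub>R v \<mu>)) = 0"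
      using insert.prems by simp
    have "(\<Sum>\<mu>\<in>L. (c \<mu> * (\<mu> - \<mu>0)) *\<^sub>R v \<mu>) =
          (\<Sum>\<mu>\<in>L. c \<mu> *\<^sub>R (\<mu> *\<^sub>R v \<mu>)) - \<mu>0 *\<^sub>R (\<Sum>\<mu>\<in>L. c \<mu> *\<^sub>R v \<mu>)"
      by (simp add: scaleR_sum_right sum_subtractf[symmetric] algebra_simps)
    also have "\<dots> = 0"
    proof -
      have A1: "(\<Sum>\<mu>\<in>L. c \<mu> *\<^sub>R v \<mu>) = - (c \<mu>0 *\<^sub>R v \<mu>0)"
        by (metis S' add_diff_cancel_left' diff_0)
      have A2: "(\<Sum>\<mu>\<in>L. c \<mu> *\<^sub>R (\<mu> *\<^sub>R v \<mu>)) = - (c \<mu>0 *\<^sub>R (\<mu>0 *\<^sub>R v \<mu>0))"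
        by (metis T add_diff_cancel_left' diff_0)
      show ?thesis unfolding A1 A2 by simp
    qed
    finally have Z: "(\<Sum>\<mu>\<in>L. (c \<mu> * (\<mu> - \<mu>0)) *\<^sub>R v \<mu>) = 0" .
    have IH: "\<forall>\<mu>\<in>L. c \<mu> * (\<mu> - \<mu>0) = 0"
      using insert.IH[rule_format, OF _ Z] insert.prems by blast
    have cL: "\<forall>\<mu>\<in>L. c \<mu> = 0" using IH insert.hyps by auto
    then have "(\<Sum>\<mu>\<in>L. c \<mu> *\<^sub>R v \<mu>) = 0" by simp
    then have "c \<mu>0 *\<^sub>R v \<mu>0 = 0" using S' by simp
    then have "c \<mu>0 = 0" using insert.prems by auto
    then show "\<forall>\<mu>\<in>insert \<mu>0 L. c \<mu> = 0" using cL by auto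
  qed
qed

lemma finite_eigenvalues:
  fixes A :: "real^'n^'n"
  shows "finite {\<mu>. is_eigenvalue A \<mu>}"
proof (rule ccontr)
  assume inf: "infinite {\<mu>. is_eigenvalue A \<mu>}"
  then obtain L where L: "finite L" "L \<subseteq> {\<mu>. is_eigenvalue A \<mu>}" "card L = CARD('n) + 1"
    using infinite_arbitrarily_large by blast
  define v where "v \<mu> = (SOME x. x \<noteq> 0 \<and> A *v x = \<mu> *\<^sub>R x)" for \<mu>
  have ev: "A *v v \<mu> = \<mu> *\<^sub>R v \<mu> \<and> v \<mu> \<noteq> 0" if "\<mu> \<in> L" for \<mu>
  proof -
    have "\<exists>x. x \<noteq> 0 \<and> A *v x = \<mu> *\<^sub>R x" using L(2) that by (auto simp: is_eigenvalue_def)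
    then show ?thesis unfolding v_def by (metis (mono_tags, lifting) someI_ex)
  qed
  have inj: "inj_on v L"
  proof
    fix \<mu> \<nu> assume h: "\<mu> \<in> L" "\<nu> \<in> L" "v \<mu> = v \<nu>"
    have "\<mu> *\<^sub>R v \<mu> = \<nu> *\<^sub>R v \<mu>" using ev[OF h(1)] ev[OF h(2)] h(3) by metis
    then have "(\<mu> - \<nu>) *\<^sub>R v \<mu> = 0" by (simp add: scaleR_diff_left)
    then show "\<mu> = \<nu>" using ev[OF h(1)] by simp
  qed
  have "independent (v ` L)"
    unfolding independent_explicit_finite_subsets
  proof (intro allI impI ballI)
    fix S u w assume S: "S \<subseteq> v ` L" "finite S" "(\<Sum>x\<in>S. u x *\<^sub>R x) = 0" and w: "w \<in> S"
    define L' where "L' = {\<mu>\<in>L. v \<mu> \<in> S}"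
    have SL: "S = v ` L'" unfolding L'_def using S(1) by blast
    have inj': "inj_on v L'" using inj unfolding L'_def by (rule inj_on_subset) blast
    have fL': "finite L'" unfolding L'_def using L(1) by simp
    have "(\<Sum>\<mu>\<in>L'. u (v \<mu>) *\<^sub>R v \<mu>) = 0" using S(3) unfolding SL
      by (simp add: sum.reindex[OF inj'])
    moreover have evL': "\<And>\<mu>. \<mu> \<in> L' \<Longrightarrow> A *v v \<mu> = \<mu> *\<^sub>R v \<mu> \<and> v \<mu> \<noteq> 0"
      using ev unfolding L'_def by blast
    have core: "\<forall>c. (\<Sum>\<mu>\<in>L'. c \<mu> *\<^sub>R v \<mu>) = 0 \<longrightarrow> (\<forall>\<mu>\<in>L'. c \<mu> = 0)"
      by (rule eig_indep_core[OF evL' fL'])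
    ultimately have "\<forall>\<mu>\<in>L'. u (v \<mu>) = 0"
      using core[rule_format, of "\<lambda>\<mu>. u (v \<mu>)"] by blast
    then show "u w = 0" using w SL by blast
  qed
  then have "card (v ` L) \<le> DIM(real^'n)" by (rule independent_bound[THEN conjunct2])
  then have "card L \<le> CARD('n)" using card_image[OF inj] by simp
  then show False using L(3) by simp
qed

lemma sym_inner:
  fixes A :: "real^'n^'n"
  assumes "transpose A = A"
  shows "y \<bullet> (A *v x) = x \<bullet> (A *v y)"
proof -
  have "y \<bullet> (A *v x) = (y v* A) \<bullet> x" by (simp add: dot_lmul_matrix)
  also have "y v* A = A *v y" using vector_transpose_matrix[of y A] assms by simp
  finally show ?thesis by (simp add: inner_commute)
qed

lemma sym_eigen:
  fixes A :: "real^'n^'n"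
  assumes sym: "transpose A = A"
  shows "\<exists>\<mu>. is_eigenvalue A \<mu>"
proof -
  define f where "f x = x \<bullet> (A *v x)" for x :: "real^'n"
  have cont: "continuous_on (sphere 0 1) f"
    unfolding f_def
    by (intro continuous_intros linear_continuous_on)
       (simp add: linear_conv_bounded_linear[symmetric])
  have ne: "sphere (0::real^'n) 1 \<noteq> {}"
    using norm_axis_1[of undefined] by (metis dist_0_norm mem_sphere empty_iff)
  obtain x where x: "x \<in> sphere 0 1" "\<forall>y\<in>sphere 0 1. f y \<le> f x"
    using continuous_attains_sup[OF compact_sphere ne cont] by blast
  define l where "l = f x"
  have xx: "x \<bullet> x = 1" using x(1) by (simp add: dot_square_norm)
  have fscale: "f (t *\<^sub>R y) = t^2 * f y" for t y
    unfolding f_def by (simp add: matrix_vector_mult_scaleR power2_eq_square)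
  define g where "g y = l * (y \<bullet> y) - f y" for y
  have g0: "g y \<ge> 0" for y
  proof (cases "y = 0")
    case True then show ?thesis by (simp add: g_def f_def)
  next
    case False
    define z where "z = (1 / norm y) *\<^sub>R y"
    have "z \<in> sphere 0 1" unfolding z_def using False by simp
    then have "f z \<le> l" using x(2) l_def by auto
    moreover have "f z = f y / (norm y)^2" unfolding z_def fscale by (simp add: power_divide)
    ultimately have "f y \<le> l * (norm y)^2" using False by (simp add: divide_le_eq)
    then show ?thesis unfolding g_def by (simp add: dot_square_norm)
  qed
  define w where "w = l *\<^sub>R x - A *v x"
  have gx: "g x = 0" unfolding g_def l_def using xx by simp
  have expand: "g (x + t *\<^sub>R w) = g x + 2 * t * (w \<bullet> w) + t^2 * g w" for t
  proof -
    have s: "x \<bullet> (A *v w) = w \<bullet> (A *v x)" using sym_inner[OF sym] by simp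
    have e1: "(x + t *\<^sub>R w) \<bullet> (x + t *\<^sub>R w) = x \<bullet> x + 2*t*(x \<bullet> w) + t^2*(w \<bullet> w)"
      by (simp add: inner_add_left inner_add_right inner_commute[of w x] power2_eq_square algebra_simps)
    have e2: "A *v (x + t *\<^sub>R w) = A *v x + t *\<^sub>R (A *v w)"
      by (simp add: matrix_vector_right_distrib matrix_vector_mult_scaleR)
    have e3: "(x + t *\<^sub>R w) \<bullet> (A *v x + t *\<^sub>R (A *v w)) =
       x \<bullet> (A *v x) + t*(x \<bullet> (A *v w)) + t*(w \<bullet> (A *v x)) + t^2*(w \<bullet> (A *v w))"
      by (simp add: inner_add_left inner_add_right algebra_simps power2_eq_square)
    have "w \<bullet> w = w \<bullet> (l *\<^sub>R x - A *v x)" by (metis w_def)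
    then have e4: "w \<bullet> w = l*(x \<bullet> w) - w \<bullet> (A *v x)"
      by (simp add: inner_diff_right inner_commute[of w x])
    have e5: "l * (t * (x \<bullet> w * 2)) = 2 * t * (l * (x \<bullet> w))" by (simp add: algebra_simps)
    have e6: "l * (x \<bullet> w) = w \<bullet> w + w \<bullet> (A *v x)" using e4 by simp
    show ?thesis unfolding g_def f_def e2 e3 using e1 e5 e6 s
      by (simp add: algebra_simps power2_eq_square inner_commute[of w x])
  qed
  have "w \<bullet> w = 0"
  proof (rule ccontr)
    assume "w \<bullet> w \<noteq> 0"
    then have W: "w \<bullet> w > 0" by (simp add: inner_gt_zero_iff)
    define s where "s = (w \<bullet> w) / (g w + 1)"
    have gw: "g w \<ge> 0" by (rule g0)
    have s0: "s > 0" unfolding s_def using W gw by simp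
    have "s * g w \<le> w \<bullet> w" unfolding s_def using W gw
      by (simp add: field_simps)
    then have "- 2 * (w \<bullet> w) + s * g w < 0" using W by linarith
    then have "s * (- 2 * (w \<bullet> w) + s * g w) < 0" using s0 by (simp add: mult_pos_neg)
    moreover have "g (x + (-s) *\<^sub>R w) \<ge> 0" by (rule g0)
    ultimately show False unfolding expand gx by (simp add: algebra_simps power2_eq_square)
  qed
  then have "w = 0" by simp
  then have "A *v x = l *\<^sub>R x" unfolding w_def by simp
  moreover have "x \<noteq> 0" using x(1) by auto
  ultimately show ?thesis unfolding is_eigenvalue_def by blast
qed



lemma Q_mult:
  fixes E :: "('a::finite) set set"
  assumes sg: "simple_graph E"
  shows "(signless_laplacian E *v x) $ u = real (degree E u) * x$u + (\<Sum>v\<in>nbr E u. x$v)"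
proof -
  have "(signless_laplacian E *v x) $ u =
     (\<Sum>v\<in>UNIV. ((if u = v then real (degree E u) else 0) + (if adj E u v then 1 else 0)) * x$v)"
    by (simp add: matrix_vector_mult_def signless_laplacian_def)
  also have "\<dots> = (\<Sum>v\<in>UNIV. (if u = v then real (degree E u) * x$v else 0))
                 + (\<Sum>v\<in>UNIV. if v \<in> nbr E u then x$v else 0)"
    unfolding sum.distrib[symmetric] using adj_neq[OF sg, of u u] by (intro sum.cong) (auto simp: nbr_def)
  also have "(\<Sum>v\<in>UNIV. (if u = v then real (degree E u) * x$v else 0)) = real (degree E u) * x$u"
    by simp
  also have "(\<Sum>v\<in>UNIV. if v \<in> nbr E u then x$v else 0) = (\<Sum>v\<in>nbr E u. x$v)"
    using sum.inter_restrict[where A=UNIV and B="nbr E u" and g="\<lambda>v. x$v"] by simp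
  finally show ?thesis .
qed

lemma Q_sym:
  fixes E :: "('a::finite) set set"
  shows "transpose (signless_laplacian E) = signless_laplacian E"
  unfolding transpose_def signless_laplacian_def vec_eq_iff
  by (auto simp: adj_sym)

lemma eig_bound:
  fixes E :: "('a::finite) set set"
  assumes sg: "simple_graph E" and deg1: "\<And>u. degree E u \<ge> 1"
    and ev: "is_eigenvalue (signless_laplacian E) \<mu>"
  shows "\<exists>u. \<mu> \<le> real (degree E u) + (\<Sum>v\<in>nbr E u. real (degree E v)) / real (degree E u)"
proof -
  obtain x where x: "x \<noteq> 0" "signless_laplacian E *v x = \<mu> *\<^sub>R x"
    using ev unfolding is_eigenvalue_def by blast
  define D where "D v = real (degree E v)" for v
  have D1: "D v \<ge> 1" for v unfolding D_def using deg1[of v] by simp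
  define r where "r v = \<bar>x$v\<bar> / D v" for v
  define M where "M = Max (range r)"
  have "M \<in> range r" unfolding M_def by (rule Max_in) auto
  then obtain u where u: "r u = M" by auto
  have rle: "r v \<le> r u" for v unfolding u M_def by simp
  obtain v0 where v0: "x$v0 \<noteq> 0" using x(1) by (metis vec_eq_iff zero_index)
  have "r v0 > 0" unfolding r_def using v0 D1[of v0] by simp
  then have ru: "r u > 0" using rle[of v0] by linarith
  then have xu: "\<bar>x$u\<bar> > 0" unfolding r_def using D1[of u] by (simp add: zero_less_divide_iff)
  have "(signless_laplacian E *v x)$u = (\<mu> *\<^sub>R x)$u" using x(2) by simp
  then have eq: "D u * x$u + (\<Sum>v\<in>nbr E u. x$v) = \<mu> * x$u"
    using Q_mult[OF sg, of x u] unfolding D_def by simp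
  have "\<bar>(\<mu> - D u) * x$u\<bar> = \<bar>\<Sum>v\<in>nbr E u. x$v\<bar>" using eq by (simp add: algebra_simps)
  also have "\<dots> \<le> (\<Sum>v\<in>nbr E u. \<bar>x$v\<bar>)" by (rule sum_abs)
  also have "\<dots> \<le> (\<Sum>v\<in>nbr E u. D v * r u)"
  proof (rule sum_mono)
    fix v assume "v \<in> nbr E u"
    have "\<bar>x$v\<bar> = D v * r v" unfolding r_def using D1[of v] by simp
    also have "\<dots> \<le> D v * r u" using rle[of v] D1[of v] by simp
    finally show "\<bar>x$v\<bar> \<le> D v * r u" .
  qed
  also have "\<dots> = (\<Sum>v\<in>nbr E u. D v) * \<bar>x$u\<bar> / D u"
    unfolding r_def by (simp add: sum_distrib_right sum_divide_distrib)
  finally have "\<bar>\<mu> - D u\<bar> * \<bar>x$u\<bar> \<le> ((\<Sum>v\<in>nbr E u. D v) / D u) * \<bar>x$u\<bar>"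
    by (simp add: abs_mult)
  then have "\<bar>\<mu> - D u\<bar> \<le> (\<Sum>v\<in>nbr E u. D v) / D u"
    by (rule mult_right_le_imp_le[OF _ xu])
  then have "\<mu> \<le> D u + (\<Sum>v\<in>nbr E u. D v) / D u" by linarith
  then show ?thesis unfolding D_def by blast
qed

lemma das_vertex:
  fixes E :: "('a::finite) set set"
  assumes sg: "simple_graph E" and deg1: "\<And>u. degree E u \<ge> 1" and n2: "CARD('a) \<ge> 2"
  shows "real (degree E u) + (\<Sum>v\<in>nbr E u. real (degree E v)) / real (degree E u)
    \<le> (\<Sum>v\<in>UNIV. real (degree E v)) / (real CARD('a) - 1) + real CARD('a) - 2"
proof -
  define D where "D v = real (degree E v)" for v
  define N where "N = nbr E u"
  define n where "n = real CARD('a)"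
  define d where "d = D u"
  define S where "S = (\<Sum>v\<in>N. D v)"
  have uN: "u \<notin> N" unfolding N_def using adj_neq[OF sg] by (auto simp: nbr_def)
  have cN: "card N = degree E u" unfolding N_def by (simp add: degree_card_nbr[OF sg])
  have Dle: "D v \<le> n - 1" for v
    unfolding D_def n_def using degree_le[OF sg, of v] n2 by (simp add: of_nat_diff)
  have d1: "d \<ge> 1" unfolding d_def D_def using deg1[of u] by simp
  have dn: "d \<le> n - 1" unfolding d_def by (rule Dle)
  have Sle: "S \<le> d * (n - 1)"
  proof -
    have "S \<le> (\<Sum>v\<in>N. n - 1)" unfolding S_def by (rule sum_mono) (rule Dle)
    also have "\<dots> = d * (n - 1)" unfolding d_def D_def using cN by simp
    finally show ?thesis .
  qed
  have split: "(\<Sum>v\<in>UNIV. D v) = (\<Sum>v\<in>UNIV - insert u N. D v) + (\<Sum>v\<in>insert u N. D v)"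
    by (rule sum.subset_diff) auto
  have ins: "(\<Sum>v\<in>insert u N. D v) = d + S" unfolding d_def S_def using uN by simp
  have "(\<Sum>v\<in>UNIV - insert u N. D v) \<ge> (\<Sum>v\<in>UNIV - insert u N. 1)"
  proof (rule sum_mono)
    fix v show "1 \<le> D v" unfolding D_def using deg1[of v] by simp
  qed
  also have "(\<Sum>v\<in>UNIV - insert u N. (1::real)) = n - 1 - d"
  proof -
    have "card (UNIV - insert u N) = CARD('a) - card (insert u N)" by (simp add: card_Diff_subset)
    moreover have "card (insert u N) = degree E u + 1" using uN cN by simp
    moreover have "card (insert u N) \<le> CARD('a)" by (rule card_mono) auto
    ultimately show ?thesis unfolding n_def d_def D_def by (simp add: of_nat_diff)
  qed
  finally have tot: "(\<Sum>v\<in>UNIV. D v) \<ge> S + n - 1" using split ins by simp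
  have n1: "n - 1 > 0" using n2 unfolding n_def by simp
  have key: "d + S/d \<le> S/(n-1) + n - 1"
  proof -
    have P: "(n - 1 - d) * (d*(n-1) - S) \<ge> 0" using dn Sle by simp
    define X where "X = d + S/d - S/(n-1) - (n - 1)"
    have "d*(n-1) * X = - ((n - 1 - d) * (d*(n-1) - S))"
      unfolding X_def using d1 n1 by (simp add: field_simps)
    then have A: "d*(n-1) * X \<le> 0" using P by simp
    have B: "d*(n-1) > 0" using d1 n1 by simp
    have "X \<le> 0"
    proof (rule ccontr)
      assume "\<not> X \<le> 0"
      then have "d*(n-1) * X > 0" using B by simp
      then show False using A by simp
    qed
    then have "d + S/d - S/(n-1) - (n - 1) \<le> 0" unfolding X_def .
    then show ?thesis by simp
  qed
  have "S/(n-1) + n - 1 \<le> (\<Sum>v\<in>UNIV. D v) / (n - 1) + n - 2"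
  proof -
    have "(S + n - 1)/(n-1) \<le> (\<Sum>v\<in>UNIV. D v) / (n - 1)" using tot n1 by (simp add: divide_right_mono)
    moreover have "(S + n - 1)/(n-1) = S/(n-1) + 1" using n1 by (simp add: field_simps)
    ultimately show ?thesis by simp
  qed
  with key show ?thesis unfolding d_def S_def N_def D_def n_def by simp
qed



definition EF :: "nat \<Rightarrow> 'a set set \<Rightarrow> 'a set \<Rightarrow> real" where
  "EF n E e = cst n / sqrt (\<Prod>u\<in>e. real (degree E u)) - 2/(real n - 1)
      - (real n - 2)/real n * (\<Sum>v\<in>e. 1 / real (degree E v))"

lemma two_edges:
  fixes E :: "('a::finite) set set"
  assumes sg: "simple_graph E"
  shows "2 * real (card E) = (\<Sum>v\<in>UNIV. real (degree E v))"
proof -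
  have "(\<Sum>e\<in>E. \<Sum>v\<in>e. (1::real)) = (\<Sum>v\<in>UNIV. real (degree E v) * 1)"
    by (rule sum_edges_vertices)
  moreover have "(\<Sum>e\<in>E. \<Sum>v\<in>e. (1::real)) = (\<Sum>e\<in>E. 2)"
    using sg unfolding simple_graph_def by (intro sum.cong) auto
  ultimately show ?thesis by simp
qed

lemma randic_gap:
  fixes E :: "('a::finite) set set"
  assumes sg: "simple_graph E" and deg1: "\<And>u. degree E u \<ge> 1"
  shows "cst CARD('a) * randic E - ((\<Sum>v\<in>UNIV. real (degree E v)) / (real CARD('a) - 1) + real CARD('a) - 2)
     = (\<Sum>e\<in>E. EF CARD('a) E e)"
proof -
  define n where "n = CARD('a)"
  have inv: "(\<Sum>e\<in>E. \<Sum>v\<in>e. 1 / real (degree E v)) = real n"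
  proof -
    have "(\<Sum>e\<in>E. \<Sum>v\<in>e. 1 / real (degree E v)) = (\<Sum>v\<in>UNIV. real (degree E v) * (1 / real (degree E v)))"
      by (rule sum_edges_vertices)
    also have "\<dots> = (\<Sum>v\<in>(UNIV::'a set). 1)"
      using deg1 by (intro sum.cong refl) (metis One_nat_def not_one_le_zero of_nat_eq_0_iff nonzero_mult_div_cancel_left div_by_1 times_divide_eq_right mult_1_right)
    finally show ?thesis unfolding n_def by simp
  qed
  have "(\<Sum>e\<in>E. EF n E e) = cst n * randic E - real (card E) * (2/(real n - 1))
          - (real n - 2)/real n * (\<Sum>e\<in>E. \<Sum>v\<in>e. 1 / real (degree E v))"
    unfolding EF_def randic_def
    by (simp add: sum_subtractf sum_distrib_left sum_divide_distrib[symmetric])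
  also have "\<dots> = cst n * randic E - (2 * real (card E)) / (real n - 1) - (real n - 2)"
    unfolding inv using n_def by simp
  finally show ?thesis unfolding two_edges[OF sg] n_def by simp
qed

lemma EF_edge:
  fixes E :: "('a::finite) set set"
  assumes sg: "simple_graph E" and e: "e \<in> E"
  shows "\<exists>a b. adj E a b \<and> EF n E e = Fe n (degree E a) (degree E b)"
proof -
  obtain a b where ab: "a \<noteq> b" "e = {a, b}" using edge_form[OF sg e] by blast
  have "adj E a b" using e ab by (simp add: adj_def)
  moreover have "EF n E e = Fe n (degree E a) (degree E b)"
    unfolding EF_def Fe_def ab using ab(1) by simp
  ultimately show ?thesis by blast
qed

lemma main_gen:
  fixes E :: "('a::finite) set set"
  assumes sg: "simple_graph E" and conn: "connected_graph E" and n12: "CARD('a) \<ge> 12"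
  defines "B \<equiv> (\<Sum>v\<in>UNIV. real (degree E v)) / (real CARD('a) - 1) + real CARD('a) - 2"
  shows "q_index E \<le> cst CARD('a) * randic E" and "randic E > 0"
    and "q_index E = cst CARD('a) * randic E \<longleftrightarrow>
         ((\<forall>a b. adj E a b \<longrightarrow> extremal CARD('a) (degree E a) (degree E b))
           \<and> is_eigenvalue (signless_laplacian E) B)"
proof -
  define n where "n = CARD('a)"
  have n2: "CARD('a) \<ge> 2" using n12 by simp
  have deg1: "degree E u \<ge> 1" for u using degree_ge1[OF sg conn n2] .
  have degle: "degree E u \<le> n - 1" for u unfolding n_def by (rule degree_le[OF sg])
  define S where "S = {\<mu>. is_eigenvalue (signless_laplacian E) \<mu>}"
  have finS: "finite S" unfolding S_def by (rule finite_eigenvalues)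
  have neS: "S \<noteq> {}" unfolding S_def using sym_eigen[OF Q_sym] by auto
  have qS: "q_index E \<in> S" unfolding q_index_def S_def[symmetric] using finS neS by (rule Max_in)
  have qge: "\<mu> \<le> q_index E" if "\<mu> \<in> S" for \<mu>
    unfolding q_index_def S_def[symmetric] using finS that by (rule Max_ge)
  have evB: "\<mu> \<le> B" if "\<mu> \<in> S" for \<mu>
  proof -
    have ev: "is_eigenvalue (signless_laplacian E) \<mu>" using that unfolding S_def by simp
    obtain u where "\<mu> \<le> real (degree E u) + (\<Sum>v\<in>nbr E u. real (degree E v)) / real (degree E u)"
      using eig_bound[OF sg deg1 ev] by blast
    also have "\<dots> \<le> B" unfolding B_def by (rule das_vertex[OF sg deg1 n2])
    finally show ?thesis .
  qed
  have qB: "q_index E \<le> B" using evB[OF qS] .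
  have EF0: "EF n E e \<ge> 0" if eE: "e \<in> E" for e
  proof -
    obtain a b where "adj E a b" "EF n E e = Fe n (degree E a) (degree E b)"
      using EF_edge[OF sg eE] by blast
    then show ?thesis using edge_ineq(1)[of n "degree E a" "degree E b"] n12 deg1 degle
      unfolding n_def by simp
  qed
  have gap: "cst n * randic E - B = (\<Sum>e\<in>E. EF n E e)"
    unfolding B_def n_def by (rule randic_gap[OF sg deg1])
  have "(\<Sum>e\<in>E. EF n E e) \<ge> 0" using EF0 by (simp add: sum_nonneg)
  then have Bc: "B \<le> cst n * randic E" using gap by linarith
  show "q_index E \<le> cst CARD('a) * randic E" using qB Bc unfolding n_def by simp
  have Bpos: "B > 0"
  proof -
    have "(\<Sum>v\<in>UNIV. real (degree E v)) / (real CARD('a) - 1) \<ge> 0"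
      using n12 by (intro divide_nonneg_nonneg sum_nonneg) auto
    then show ?thesis unfolding B_def using n12 by simp
  qed
  have cpos: "cst n > 0" unfolding cst_def using n12 unfolding n_def by simp
  show "randic E > 0"
  proof (rule ccontr)
    assume "\<not> randic E > 0"
    then have "cst n * randic E \<le> 0" using cpos by (simp add: mult_le_0_iff)
    then show False using Bc Bpos by simp
  qed
  have ext_iff: "(\<Sum>e\<in>E. EF n E e) = 0 \<longleftrightarrow> (\<forall>a b. adj E a b \<longrightarrow> extremal n (degree E a) (degree E b))"
  proof -
    have "(\<Sum>e\<in>E. EF n E e) = 0 \<longleftrightarrow> (\<forall>e\<in>E. EF n E e = 0)"
      using EF0 by (intro sum_nonneg_eq_0_iff) auto
    also have "\<dots> \<longleftrightarrow> (\<forall>a b. adj E a b \<longrightarrow> extremal n (degree E a) (degree E b))"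
    proof
      assume h: "\<forall>e\<in>E. EF n E e = 0"
      show "\<forall>a b. adj E a b \<longrightarrow> extremal n (degree E a) (degree E b)"
      proof (intro allI impI)
        fix a b assume ab: "adj E a b"
        then have "{a,b} \<in> E" by (simp add: adj_def)
        then have "EF n E {a,b} = 0" using h by blast
        moreover have "a \<noteq> b" using adj_neq[OF sg ab] .
        ultimately have "Fe n (degree E a) (degree E b) = 0" unfolding EF_def Fe_def by simp
        then show "extremal n (degree E a) (degree E b)"
          using edge_ineq(2)[of n "degree E a" "degree E b"] n12 deg1 degle unfolding n_def by simp
      qed
    next
      assume h: "\<forall>a b. adj E a b \<longrightarrow> extremal n (degree E a) (degree E b)"
      show "\<forall>e\<in>E. EF n E e = 0"
      proof
        fix e assume "e \<in> E"
        then obtain a b where "adj E a b" "EF n E e = Fe n (degree E a) (degree E b)"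
          using EF_edge[OF sg] by blast
        then show "EF n E e = 0"
          using h edge_ineq(2)[of n "degree E a" "degree E b"] n12 deg1 degle unfolding n_def by simp
      qed
    qed
    finally show ?thesis .
  qed
  show "q_index E = cst CARD('a) * randic E \<longleftrightarrow>
         ((\<forall>a b. adj E a b \<longrightarrow> extremal CARD('a) (degree E a) (degree E b))
           \<and> is_eigenvalue (signless_laplacian E) B)"
  proof
    assume h: "q_index E = cst CARD('a) * randic E"
    then have "B = q_index E" using qB Bc unfolding n_def by simp
    then have "B \<in> S" using qS by simp
    moreover have "(\<Sum>e\<in>E. EF n E e) = 0" using gap h qB Bc unfolding n_def by simp
    ultimately show "(\<forall>a b. adj E a b \<longrightarrow> extremal CARD('a) (degree E a) (degree E b))
           \<and> is_eigenvalue (signless_laplacian E) B" using ext_iff unfolding S_def n_def by simp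
  next
    assume h: "(\<forall>a b. adj E a b \<longrightarrow> extremal CARD('a) (degree E a) (degree E b))
           \<and> is_eigenvalue (signless_laplacian E) B"
    then have "(\<Sum>e\<in>E. EF n E e) = 0" using ext_iff unfolding n_def by simp
    then have "B = cst n * randic E" using gap by simp
    moreover have "B \<le> q_index E" using h qge unfolding S_def by simp
    ultimately show "q_index E = cst CARD('a) * randic E" using qB unfolding n_def by simp
  qed
qed



lemma nbr_full:
  fixes E :: "('a::finite) set set"
  assumes sg: "simple_graph E" and d: "degree E u = CARD('a) - 1"
  shows "nbr E u = UNIV - {u}"
proof (rule card_subset_eq)
  show "finite (UNIV - {u})" by simp
  show "nbr E u \<subseteq> UNIV - {u}" by (rule nbr_sub[OF sg])
  show "card (nbr E u) = card (UNIV - {u})"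
    using d by (simp add: degree_card_nbr[OF sg] card_Diff_singleton)
qed

lemma has_nbr:
  fixes E :: "('a::finite) set set"
  assumes sg: "simple_graph E" and d: "degree E u \<ge> 1"
  shows "\<exists>w. adj E u w"
proof -
  have "nbr E u \<noteq> {}" using d by (auto simp: degree_card_nbr[OF sg])
  then show ?thesis by (auto simp: nbr_def)
qed

lemma complete_char:
  fixes E :: "('a::finite) set set"
  assumes sg: "simple_graph E" and conn: "connected_graph E" and n: "CARD('a) = 12"
  shows "((\<forall>a b. adj E a b \<longrightarrow> extremal CARD('a) (degree E a) (degree E b))
      \<and> is_eigenvalue (signless_laplacian E)
          ((\<Sum>v\<in>UNIV. real (degree E v)) / (real CARD('a) - 1) + real CARD('a) - 2))
    \<longleftrightarrow> is_complete_graph E"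
proof
  assume h: "(\<forall>a b. adj E a b \<longrightarrow> extremal CARD('a) (degree E a) (degree E b))
      \<and> is_eigenvalue (signless_laplacian E)
          ((\<Sum>v\<in>UNIV. real (degree E v)) / (real CARD('a) - 1) + real CARD('a) - 2)"
  show "is_complete_graph E" unfolding is_complete_graph_def
  proof (intro allI impI)
    fix u v :: 'a assume uv: "u \<noteq> v"
    have "degree E u \<ge> 1" using degree_ge1[OF sg conn] n by simp
    then obtain w where "adj E u w" using has_nbr[OF sg] by blast
    then have "degree E u = 11" using h n unfolding extremal_def by auto
    then have "nbr E u = UNIV - {u}" using nbr_full[OF sg] n by simp
    then show "adj E u v" using uv by (auto simp: nbr_def)
  qed
next
  assume c: "is_complete_graph E"
  have nb: "nbr E u = UNIV - {u}" for u
    using c adj_neq[OF sg, of u] unfolding is_complete_graph_def nbr_def by auto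
  have dg: "degree E u = 11" for u
    unfolding degree_card_nbr[OF sg] nb using n by (simp add: card_Diff_singleton)
  have ext: "\<forall>a b. adj E a b \<longrightarrow> extremal CARD('a) (degree E a) (degree E b)"
    unfolding extremal_def using n dg by simp
  have Bv: "(\<Sum>v\<in>UNIV. real (degree E v)) / (real CARD('a) - 1) + real CARD('a) - 2 = 22"
    using n dg by simp
  define x :: "real^'a" where "x = (\<chi> i. 1)"
  have "x $ undefined \<noteq> 0" unfolding x_def by simp
  then have "x \<noteq> 0" by (auto simp del: vec_lambda_beta)
  moreover have "signless_laplacian E *v x = 22 *\<^sub>R x"
  proof -
    have "(signless_laplacian E *v x) $ u = (22 *\<^sub>R x) $ u" for u
    proof -
      have "card (nbr E u) = 11" using dg[of u] by (simp add: degree_card_nbr[OF sg])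
      then show ?thesis unfolding Q_mult[OF sg] x_def using dg[of u] by simp
    qed
    then show ?thesis by (simp add: vec_eq_iff)
  qed
  ultimately show "(\<forall>a b. adj E a b \<longrightarrow> extremal CARD('a) (degree E a) (degree E b))
      \<and> is_eigenvalue (signless_laplacian E)
          ((\<Sum>v\<in>UNIV. real (degree E v)) / (real CARD('a) - 1) + real CARD('a) - 2)"
    unfolding Bv is_eigenvalue_def using ext by blast
qed

lemma star_char:
  fixes E :: "('a::finite) set set"
  assumes sg: "simple_graph E" and conn: "connected_graph E" and n: "CARD('a) \<ge> 13"
  shows "((\<forall>a b. adj E a b \<longrightarrow> extremal CARD('a) (degree E a) (degree E b))
      \<and> is_eigenvalue (signless_laplacian E)
          ((\<Sum>v\<in>UNIV. real (degree E v)) / (real CARD('a) - 1) + real CARD('a) - 2))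
    \<longleftrightarrow> is_star_graph E"
proof
  assume h: "(\<forall>a b. adj E a b \<longrightarrow> extremal CARD('a) (degree E a) (degree E b))
      \<and> is_eigenvalue (signless_laplacian E)
          ((\<Sum>v\<in>UNIV. real (degree E v)) / (real CARD('a) - 1) + real CARD('a) - 2)"
  have ext: "adj E a b \<Longrightarrow> (degree E a = 1 \<and> degree E b = CARD('a) - 1) \<or>
        (degree E a = CARD('a) - 1 \<and> degree E b = 1)" for a b
    using h n unfolding extremal_def by auto
  obtain a0 :: 'a where True by simp
  have "degree E a0 \<ge> 1" using degree_ge1[OF sg conn] n by simp
  then obtain b0 where ab0: "adj E a0 b0" using has_nbr[OF sg] by blast
  obtain c0 where c0: "degree E c0 = CARD('a) - 1"
    using ext[OF ab0] by blast
  have nc: "nbr E c0 = UNIV - {c0}" by (rule nbr_full[OF sg c0])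
  have leaf: "nbr E v = {c0}" if "v \<noteq> c0" for v
  proof -
    have "adj E c0 v" using nc that by (auto simp: nbr_def)
    then have "degree E v = 1" using ext c0 n by fastforce
    then have cv: "card (nbr E v) = 1" by (simp add: degree_card_nbr[OF sg])
    have "c0 \<in> nbr E v" using \<open>adj E c0 v\<close> by (simp add: nbr_def adj_sym)
    then show ?thesis using cv by (metis card_1_singletonE singletonD)
  qed
  show "is_star_graph E" unfolding is_star_graph_def
  proof (intro exI set_eqI iffI)
    fix e assume e: "e \<in> E"
    then obtain a b where ab: "a \<noteq> b" "e = {a, b}" using edge_form[OF sg] by blast
    have adjab: "adj E a b" using e ab by (simp add: adj_def)
    show "e \<in> {{c0, v} |v. v \<noteq> c0}"
    proof (cases "a = c0")
      case True then show ?thesis using ab by auto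
    next
      case False
      then have "b \<in> nbr E a" using adjab by (simp add: nbr_def)
      then have "b = c0" using leaf[OF False] by simp
      then show ?thesis using ab False by (auto simp: insert_commute)
    qed
  next
    fix e assume "e \<in> {{c0, v} |v. v \<noteq> c0}"
    then obtain v where v: "v \<noteq> c0" "e = {c0, v}" by blast
    then have "v \<in> nbr E c0" using nc by simp
    then show "e \<in> E" using v by (simp add: nbr_def adj_def)
  qed
next
  assume "is_star_graph E"
  then obtain c0 where Ec: "E = {{c0, v} |v. v \<noteq> c0}" unfolding is_star_graph_def by blast
  have adj_iff: "adj E a b \<longleftrightarrow> (a = c0 \<and> b \<noteq> c0) \<or> (b = c0 \<and> a \<noteq> c0)" for a b
    unfolding adj_def Ec by (auto simp: doubleton_eq_iff)
  have nc: "nbr E c0 = UNIV - {c0}" unfolding nbr_def using adj_iff by auto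
  have nv: "nbr E v = {c0}" if "v \<noteq> c0" for v unfolding nbr_def using adj_iff that by auto
  have dc: "degree E c0 = CARD('a) - 1"
    unfolding degree_card_nbr[OF sg] nc by (simp add: card_Diff_singleton)
  have dv: "degree E v = 1" if "v \<noteq> c0" for v
    unfolding degree_card_nbr[OF sg] nv[OF that] by simp
  have ext: "\<forall>a b. adj E a b \<longrightarrow> extremal CARD('a) (degree E a) (degree E b)"
    unfolding extremal_def using n adj_iff dc dv by auto
  define n' where "n' = real CARD('a)"
  have n1: "n' - 1 > 0" unfolding n'_def using n by simp
  have sumD: "(\<Sum>v\<in>UNIV. real (degree E v)) = 2 * (n' - 1)"
  proof -
    have "(\<Sum>v\<in>UNIV. real (degree E v)) = real (degree E c0) + (\<Sum>v\<in>UNIV - {c0}. real (degree E v))"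
      by (simp add: sum.remove)
    also have "(\<Sum>v\<in>UNIV - {c0}. real (degree E v)) = (\<Sum>v\<in>UNIV - {c0}. 1)"
      using dv by (intro sum.cong) auto
    also have "\<dots> = n' - 1" unfolding n'_def using n by (simp add: card_Diff_singleton of_nat_diff)
    finally show ?thesis using dc n unfolding n'_def by (simp add: of_nat_diff)
  qed
  have Bv: "(\<Sum>v\<in>UNIV. real (degree E v)) / (real CARD('a) - 1) + real CARD('a) - 2 = n'"
  proof -
    have "(2 * (n' - 1)) / (n' - 1) = 2" using n1 by (intro nonzero_mult_div_cancel_right) simp
    then show ?thesis unfolding sumD n'_def[symmetric] by linarith
  qed
  define x :: "real^'a" where "x = (\<chi> i. if i = c0 then n' - 1 else 1)"
  have "x $ c0 \<noteq> 0" unfolding x_def using n1 by simp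
  then have "x \<noteq> 0" by (auto simp del: vec_lambda_beta)
  moreover have "signless_laplacian E *v x = n' *\<^sub>R x"
  proof -
    have "(signless_laplacian E *v x) $ u = (n' *\<^sub>R x) $ u" for u
    proof (cases "u = c0")
      case True
      have "(\<Sum>v\<in>nbr E u. x$v) = (\<Sum>v\<in>UNIV - {c0}. 1)"
        unfolding True nc x_def by (intro sum.cong) auto
      also have "\<dots> = n' - 1" unfolding n'_def using n by (simp add: card_Diff_singleton of_nat_diff)
      finally show ?thesis unfolding Q_mult[OF sg] using True dc n
        by (simp add: x_def n'_def of_nat_diff algebra_simps)
    next
      case False
      show ?thesis unfolding Q_mult[OF sg] nv[OF False] using False dv[OF False]
        by (simp add: x_def)
    qed
    then show ?thesis by (simp add: vec_eq_iff)
  qed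
  ultimately show "(\<forall>a b. adj E a b \<longrightarrow> extremal CARD('a) (degree E a) (degree E b))
      \<and> is_eigenvalue (signless_laplacian E)
          ((\<Sum>v\<in>UNIV. real (degree E v)) / (real CARD('a) - 1) + real CARD('a) - 2)"
    unfolding Bv is_eigenvalue_def using ext by blast
qed

theorem theorem1p2:
  fixes E :: "('a::finite) set set"
  assumes "simple_graph E" and "connected_graph E"
  shows "(CARD('a) = 12 \<longrightarrow>
            q_index E / randic E \<le> 11 / 3 \<and>
            (q_index E / randic E = 11 / 3 \<longleftrightarrow> is_complete_graph E))
       \<and> (CARD('a) \<ge> 13 \<longrightarrow>
            q_index E / randic E \<le> real CARD('a) / sqrt (real CARD('a) - 1) \<and>
            (q_index E / randic E = real CARD('a) / sqrt (real CARD('a) - 1)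
               \<longleftrightarrow> is_star_graph E))"
proof (intro conjI impI)
  assume n: "CARD('a) = 12"
  have n12: "CARD('a) \<ge> 12" using n by simp
  note M = main_gen[OF assms n12]
  have c: "cst CARD('a) = 11/3" unfolding cst_def using n by simp
  show "q_index E / randic E \<le> 11 / 3" using M(1,2) c by (simp add: pos_divide_le_eq)
  show "q_index E / randic E = 11 / 3 \<longleftrightarrow> is_complete_graph E"
    using M(2,3) c complete_char[OF assms n] by (auto simp: divide_eq_eq)
next
  assume n: "CARD('a) \<ge> 13"
  have n12: "CARD('a) \<ge> 12" using n by simp
  note M = main_gen[OF assms n12]
  have c: "cst CARD('a) = real CARD('a) / sqrt (real CARD('a) - 1)" unfolding cst_def using n by simp
  show "q_index E / randic E \<le> real CARD('a) / sqrt (real CARD('a) - 1)"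
    using M(1,2) c by (simp add: pos_divide_le_eq)
  show "q_index E / randic E = real CARD('a) / sqrt (real CARD('a) - 1) \<longleftrightarrow> is_star_graph E"
    using M(2,3) c star_char[OF assms n] by (auto simp: divide_eq_eq)
qed


end
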